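(* Let $\mathcal{X}$ be a Hilbert $C^*$-module over a $C^*$-algebra $\mathcal{A}$, let $K\in\mathcal{L}(\mathcal{X})$ be a projection, and let $x,u,v\in\mathcal{X}$ with $u+v\in{\rm ran}(K)$. Then \[ [x,x]_{(I-K)}=|x|^2-\langle Kx,x\rangle\leq \tfrac14|v-u|^2-{\rm Re}\langle x-u,v-x\rangle. \] In particular, if ${\rm Re}\langle x-u,v-x\rangle\geq0$, then $|x|^2-\langle Kx,x\rangle\leq\tfrac14|v-u|^2$.
   Context: $\langle\cdot,\cdot\rangle$ is the $\mathcal{A}$-valued inner product, $\mathcal{A}$-linear in the second variable. For $z\in\mathcal{X}$, $|z|=\langle z,z\rangle^{1/2}\in\mathcal{A}$, so $|z|^2=\langle z,z\rangle$. $\mathcal{L}(\mathcal{X})$ is the $C^*$-algebra of adjointable maps on $\mathcal{X}$, with identity $I$. For positive $S\in\mathcal{L}(\mathcal{X})$, $[x,y]_S=\langle Sx,y\rangle$. For $a\in\mathcal{A}$, ${\rm Re}\,a=(a+a^* )/2$. *)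

theory Defs
  imports "HOL-Analysis.Analysis"
begin

definition cstar_algebra :: "(complex \<Rightarrow> 'a::{real_normed_algebra,banach} \<Rightarrow> 'a) \<Rightarrow> ('a \<Rightarrow> 'a) \<Rightarrow> bool" where
  "cstar_algebra sc star \<longleftrightarrow>
     (\<forall>c a b. sc c (a + b) = sc c a + sc c b) \<and>
     (\<forall>c d a. sc (c + d) a = sc c a + sc d a) \<and>
     (\<forall>c d a. sc c (sc d a) = sc (c * d) a) \<and>
     (\<forall>a. sc 1 a = a) \<and>
     (\<forall>r a. sc (complex_of_real r) a = scaleR r a) \<and>
     (\<forall>c a b. sc c (a * b) = sc c a * b \<and> sc c (a * b) = a * sc c b) \<and>
     (\<forall>c a. norm (sc c a) = cmod c * norm a) \<and>
     (\<forall>a. star (star a) = a) \<and>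
     (\<forall>a b. star (a + b) = star a + star b) \<and>
     (\<forall>c a. star (sc c a) = sc (cnj c) (star a)) \<and>
     (\<forall>a b. star (a * b) = star b * star a) \<and>
     (\<forall>a. norm (star a * a) = (norm a)\<^sup>2)"

text \<open>Positive elements (in a C*-algebra exactly the elements b* b) and the induced order.\<close>

definition cstar_pos :: "('a::{real_normed_algebra,banach} \<Rightarrow> 'a) \<Rightarrow> 'a \<Rightarrow> bool" where
  "cstar_pos star a \<longleftrightarrow> (\<exists>b. a = star b * b)"

definition cstar_le :: "('a::{real_normed_algebra,banach} \<Rightarrow> 'a) \<Rightarrow> 'a \<Rightarrow> 'a \<Rightarrow> bool" where
  "cstar_le star a b \<longleftrightarrow> cstar_pos star (b - a)"

definition cstar_Re :: "('a::{real_normed_algebra,banach} \<Rightarrow> 'a) \<Rightarrow> 'a \<Rightarrow> 'a" where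
  "cstar_Re star a = scaleR (1/2) (a + star a)"

definition hilbert_cstar_module ::
  "(complex \<Rightarrow> 'a::{real_normed_algebra,banach} \<Rightarrow> 'a) \<Rightarrow> ('a \<Rightarrow> 'a) \<Rightarrow>
   (complex \<Rightarrow> 'x::ab_group_add \<Rightarrow> 'x) \<Rightarrow> ('x \<Rightarrow> 'a \<Rightarrow> 'x) \<Rightarrow> ('x \<Rightarrow> 'x \<Rightarrow> 'a) \<Rightarrow> bool" where
  "hilbert_cstar_module sc star scX act ip \<longleftrightarrow>
     cstar_algebra sc star \<and>
     (\<forall>c x y. scX c (x + y) = scX c x + scX c y) \<and>
     (\<forall>c d x. scX (c + d) x = scX c x + scX d x) \<and>
     (\<forall>c d x. scX c (scX d x) = scX (c * d) x) \<and>
     (\<forall>x. scX 1 x = x) \<and>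
     (\<forall>x y a. act (x + y) a = act x a + act y a) \<and>
     (\<forall>x a b. act x (a + b) = act x a + act x b) \<and>
     (\<forall>x a b. act (act x a) b = act x (a * b)) \<and>
     (\<forall>c x a. scX c (act x a) = act (scX c x) a \<and> scX c (act x a) = act x (sc c a)) \<and>
     (\<forall>x y z. ip x (y + z) = ip x y + ip x z) \<and>
     (\<forall>c x y. ip x (scX c y) = sc c (ip x y)) \<and>
     (\<forall>x y a. ip x (act y a) = ip x y * a) \<and>
     (\<forall>x y. ip y x = star (ip x y)) \<and>
     (\<forall>x. cstar_pos star (ip x x)) \<and>
     (\<forall>x. ip x x = 0 \<longrightarrow> x = 0) \<and>
     (\<forall>f :: nat \<Rightarrow> 'x.
        (\<forall>e>0. \<exists>N. \<forall>m\<ge>N. \<forall>n\<ge>N. sqrt (norm (ip (f m - f n) (f m - f n))) < e) \<longrightarrow>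
        (\<exists>l. \<forall>e>0. \<exists>N. \<forall>n\<ge>N. sqrt (norm (ip (f n - l) (f n - l))) < e))"

definition adjointable :: "('x \<Rightarrow> 'x \<Rightarrow> 'a) \<Rightarrow> ('x \<Rightarrow> 'x) \<Rightarrow> bool" where
  "adjointable ip T \<longleftrightarrow> (\<exists>S. \<forall>x y. ip (T x) y = ip x (S y))"

definition module_projection :: "('x \<Rightarrow> 'x \<Rightarrow> 'a) \<Rightarrow> ('x \<Rightarrow> 'x) \<Rightarrow> bool" where
  "module_projection ip K \<longleftrightarrow>
     adjointable ip K \<and> (\<forall>x y. ip (K x) y = ip x (K y)) \<and> (\<forall>x. K (K x) = K x)"

definition semi_inner :: "('x \<Rightarrow> 'x \<Rightarrow> 'a) \<Rightarrow> ('x \<Rightarrow> 'x) \<Rightarrow> 'x \<Rightarrow> 'x \<Rightarrow> 'a" where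
  "semi_inner ip S x y = ip (S x) y"

end

theory Submission
  imports Defs "HOL-Computational_Algebra.Formal_Power_Series"
begin

definition bb :: "nat \<Rightarrow> real" where "bb n = ((1/2::real) gchoose n) * (-1)^n"
definition cc :: "nat \<Rightarrow> real" where "cc n = (if n = 0 then 0 else - bb n)"

lemma bb_Suc: "bb (Suc k) = bb k * (2 * real k - 1) / (2 * real k + 2)"
proof -
  have "(1/2::real) * ((1/2) gchoose k) = real k * ((1/2) gchoose k) + real (Suc k) * ((1/2) gchoose (Suc k))"
    by (rule gbinomial_mult_1)
  then have eq: "((1/2::real) gchoose (Suc k)) = (1 - 2 * real k) * ((1/2) gchoose k) / (2 * real k + 2)"
    by (simp add: field_simps)
  show ?thesis unfolding bb_def power_Suc eq by (simp add: field_simps)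
qed

lemma bb0 [simp]: "bb 0 = 1" by (simp add: bb_def)
lemma cc0 [simp]: "cc 0 = 0" by (simp add: cc_def)
lemma cc1 [simp]: "cc (Suc 0) = 1/2" by (simp add: cc_def bb_def)

lemma cc_SS: "cc (Suc (Suc k)) = cc (Suc k) * (2 * real k + 1) / (2 * real k + 4)"
  unfolding cc_def using bb_Suc[of "Suc k"] by (simp add: field_simps)

lemma cc_nonneg: "0 \<le> cc n"
proof (induction n)
  case 0 then show ?case by simp
next
  case (Suc n)
  then show ?case
  proof (cases n)
    case 0 then show ?thesis by simp
  next
    case (Suc k)
    with Suc.IH show ?thesis by (simp add: cc_SS)
  qed
qed

lemma cc_psum: "(\<Sum>n\<le>N. cc n) = 1 - (2 * real N + 2) * cc (Suc N)"
proof (induction N)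
  case 0 then show ?case by simp
next
  case (Suc N)
  have "(\<Sum>n\<le>Suc N. cc n) = 1 - (2 * real N + 2) * cc (Suc N) + cc (Suc N)"
    using Suc by simp
  also have "\<dots> = 1 - (2 * real (Suc N) + 2) * cc (Suc (Suc N))"
    by (simp add: cc_SS field_simps)
  finally show ?case .
qed

lemma cc_psum_le: "(\<Sum>n<N. cc n) \<le> 1"
proof (cases N)
  case 0 then show ?thesis by simp
next
  case (Suc M)
  have "{..<N} = {..M}" using Suc by auto
  then show ?thesis using cc_psum[of M] cc_nonneg[of "Suc M"] by simp
qed

lemma summable_cc: "summable cc"
  by (rule summableI_nonneg_bounded[where x=1]) (auto intro: cc_nonneg cc_psum_le)

lemma bb_conv: "(\<Sum>i\<le>n. bb i * bb (n - i)) = (if n = 0 then 1 else if n = 1 then -1 else 0)"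
proof -
  have V: "(\<Sum>k=0..n. ((1/2::real) gchoose k) * ((1/2) gchoose (n - k))) = (1/2 + 1/2) gchoose n"
    by (rule gbinomial_Vandermonde)
  have "(\<Sum>i\<le>n. bb i * bb (n - i)) = (\<Sum>k=0..n. ((1/2::real) gchoose k) * ((1/2) gchoose (n - k))) * (-1)^n"
    unfolding bb_def sum_distrib_right atLeast0AtMost
    by (rule sum.cong) (auto simp: power_add[symmetric])
  also have "\<dots> = ((1::real) gchoose n) * (-1)^n" using V by simp
  also have "\<dots> = real (1 choose n) * (-1)^n"
    using binomial_gbinomial[of 1 n, where 'a=real] by simp
  also have "\<dots> = (if n = 0 then 1 else if n = 1 then -1 else 0)"
    by (cases n) (auto simp: binomial_eq_0)
  finally show ?thesis .
qed

lemma cc_conv: "(\<Sum>i\<le>n. cc i * cc (n - i)) = 2 * cc n - (if n = 1 then 1 else 0)"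
proof -
  define d :: "nat \<Rightarrow> real" where "d i = (if i = 0 then 1 else 0)" for i
  have c: "cc i = d i - bb i" for i by (simp add: cc_def d_def)
  have s1: "(\<Sum>i\<le>n. d i * d (n - i)) = d n"
    by (cases n) (auto simp: d_def)
  have s2: "(\<Sum>i\<le>n. d i * bb (n - i)) = bb n"
  proof -
    have "(\<Sum>i\<le>n. d i * bb (n - i)) = (\<Sum>i\<le>n. if i = 0 then bb (n - i) else 0)"
      by (rule sum.cong) (auto simp: d_def)
    then show ?thesis by simp
  qed
  have s3: "(\<Sum>i\<le>n. bb i * d (n - i)) = bb n"
  proof -
    have "(\<Sum>i\<le>n. bb i * d (n - i)) = (\<Sum>i\<le>n. if i = n then bb i else 0)"
      by (rule sum.cong) (auto simp: d_def)
    then show ?thesis by simp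
  qed
  have "(\<Sum>i\<le>n. cc i * cc (n - i)) = (\<Sum>i\<le>n. d i * d (n - i)) - (\<Sum>i\<le>n. d i * bb (n - i))
        - (\<Sum>i\<le>n. bb i * d (n - i)) + (\<Sum>i\<le>n. bb i * bb (n - i))"
    unfolding c by (simp add: algebra_simps sum.distrib sum_subtractf)
  also have "\<dots> = d n - 2 * bb n + (if n = 0 then 1 else if n = 1 then -1 else 0)"
    using s1 s2 s3 bb_conv by simp
  also have "\<dots> = 2 * cc n - (if n = 1 then 1 else 0)"
    by (simp add: c d_def)
  finally show ?thesis .
qed

lemma Cauchy_product_sums_scaleR:
  fixes a :: "nat \<Rightarrow> real" and b :: "nat \<Rightarrow> 'a::banach"
  assumes a: "summable (\<lambda>k. norm (a k))"
    and b: "summable (\<lambda>k. norm (b k))"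
  shows "(\<lambda>k. \<Sum>i\<le>k. a i *\<^sub>R b (k - i)) sums ((\<Sum>k. a k) *\<^sub>R (\<Sum>k. b k))"
proof -
  let ?S1 = "\<lambda>n::nat. {..<n} \<times> {..<n}"
  let ?S2 = "\<lambda>n::nat. {(i,j). i + j < n}"
  have S1_mono: "\<And>m n. m \<le> n \<Longrightarrow> ?S1 m \<subseteq> ?S1 n" by auto
  have S2_le_S1: "\<And>n. ?S2 n \<subseteq> ?S1 n" by auto
  have S1_le_S2: "\<And>n. ?S1 (n div 2) \<subseteq> ?S2 n" by auto
  have finite_S1: "\<And>n. finite (?S1 n)" by simp
  with S2_le_S1 have finite_S2: "\<And>n. finite (?S2 n)" by (rule finite_subset)
  let ?g = "\<lambda>(i,j). a i *\<^sub>R b j"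
  let ?f = "\<lambda>(i,j). norm (a i) * norm (b j)"
  have f_nonneg: "\<And>x. 0 \<le> ?f x" by auto
  then have norm_sum_f: "\<And>A. norm (sum ?f A) = sum ?f A"
    unfolding real_norm_def
    by (simp only: abs_of_nonneg sum_nonneg [rule_format])
  have "(\<lambda>n. (\<Sum>k<n. a k) *\<^sub>R (\<Sum>k<n. b k)) \<longlonglongrightarrow> (\<Sum>k. a k) *\<^sub>R (\<Sum>k. b k)"
    by (intro tendsto_scaleR summable_LIMSEQ summable_norm_cancel [OF a] summable_norm_cancel [OF b])
  moreover have "\<And>n. (\<Sum>k<n. a k) *\<^sub>R (\<Sum>k<n. b k) = sum ?g (?S1 n)"
  proof -
    fix n
    have "(\<Sum>k<n. a k) *\<^sub>R (\<Sum>k<n. b k) = (\<Sum>i<n. a i *\<^sub>R (\<Sum>j<n. b j))"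
      by (rule scaleR_sum_left)
    also have "\<dots> = (\<Sum>i<n. \<Sum>j<n. a i *\<^sub>R b j)"
      by (simp add: scaleR_sum_right)
    also have "\<dots> = sum ?g (?S1 n)"
      by (simp add: sum.cartesian_product)
    finally show "(\<Sum>k<n. a k) *\<^sub>R (\<Sum>k<n. b k) = sum ?g (?S1 n)" .
  qed
  ultimately have 1: "(\<lambda>n. sum ?g (?S1 n)) \<longlonglongrightarrow> (\<Sum>k. a k) *\<^sub>R (\<Sum>k. b k)"
    by simp
  have "(\<lambda>n. (\<Sum>k<n. norm (a k)) * (\<Sum>k<n. norm (b k))) \<longlonglongrightarrow> (\<Sum>k. norm (a k)) * (\<Sum>k. norm (b k))"
    using a b by (intro tendsto_mult summable_LIMSEQ)
  then have "(\<lambda>n. sum ?f (?S1 n)) \<longlonglongrightarrow> (\<Sum>k. norm (a k)) * (\<Sum>k. norm (b k))"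
    by (simp only: sum_product sum.Sigma [rule_format] finite_lessThan)
  then have "convergent (\<lambda>n. sum ?f (?S1 n))"
    by (rule convergentI)
  then have Cauchy: "Cauchy (\<lambda>n. sum ?f (?S1 n))"
    by (rule convergent_Cauchy)
  have "Zfun (\<lambda>n. sum ?f (?S1 n - ?S2 n)) sequentially"
  proof (rule ZfunI, simp only: eventually_sequentially norm_sum_f)
    fix r :: real
    assume r: "0 < r"
    from CauchyD [OF Cauchy r] obtain N
      where "\<forall>m\<ge>N. \<forall>n\<ge>N. norm (sum ?f (?S1 m) - sum ?f (?S1 n)) < r" ..
    then have "\<And>m n. N \<le> n \<Longrightarrow> n \<le> m \<Longrightarrow> norm (sum ?f (?S1 m - ?S1 n)) < r"
      by (simp only: sum_diff finite_S1 S1_mono)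
    then have N: "\<And>m n. N \<le> n \<Longrightarrow> n \<le> m \<Longrightarrow> sum ?f (?S1 m - ?S1 n) < r"
      by (simp only: norm_sum_f)
    show "\<exists>N. \<forall>n\<ge>N. sum ?f (?S1 n - ?S2 n) < r"
    proof (intro exI allI impI)
      fix n
      assume "2 * N \<le> n"
      then have n: "N \<le> n div 2" by simp
      have "sum ?f (?S1 n - ?S2 n) \<le> sum ?f (?S1 n - ?S1 (n div 2))"
        by (intro sum_mono2 finite_Diff finite_S1 f_nonneg Diff_mono subset_refl S1_le_S2)
      also have "\<dots> < r"
        using n div_le_dividend by (rule N)
      finally show "sum ?f (?S1 n - ?S2 n) < r" .
    qed
  qed
  then have "Zfun (\<lambda>n. sum ?g (?S1 n - ?S2 n)) sequentially"
    apply (rule Zfun_le [rule_format])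
    apply (simp only: norm_sum_f)
    apply (rule order_trans [OF norm_sum sum_mono])
    apply (auto)
    done
  then have 2: "(\<lambda>n. sum ?g (?S1 n) - sum ?g (?S2 n)) \<longlonglongrightarrow> 0"
    unfolding tendsto_Zfun_iff diff_0_right
    by (simp only: sum_diff finite_S1 S2_le_S1)
  with 1 have "(\<lambda>n. sum ?g (?S2 n)) \<longlonglongrightarrow> (\<Sum>k. a k) *\<^sub>R (\<Sum>k. b k)"
    by (rule Lim_transform2)
  then show ?thesis
    by (simp only: sums_def sum.triangle_reindex)
qed

locale cstar =
  fixes sc :: "complex \<Rightarrow> 'a::{real_normed_algebra,banach} \<Rightarrow> 'a"
    and star :: "'a \<Rightarrow> 'a"
  assumes cs: "cstar_algebra sc star"
begin

lemmas csx = cs[unfolded cstar_algebra_def]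
lemma sc_add: "sc c (a + b) = sc c a + sc c b" using csx[THEN conjunct1] by blast
lemma sc_sc: "sc c (sc d a) = sc (c * d) a" using csx[THEN conjunct2, THEN conjunct2, THEN conjunct1] by blast
lemma sc_real: "sc (complex_of_real r) a = r *\<^sub>R a"
  using csx[THEN conjunct2, THEN conjunct2, THEN conjunct2, THEN conjunct2, THEN conjunct1] by blast
lemma sc_multL: "sc c (a * b) = sc c a * b"
  using csx[THEN conjunct2, THEN conjunct2, THEN conjunct2, THEN conjunct2, THEN conjunct2, THEN conjunct1] by blast
lemma sc_multR: "sc c (a * b) = a * sc c b"
  using csx[THEN conjunct2, THEN conjunct2, THEN conjunct2, THEN conjunct2, THEN conjunct2, THEN conjunct1] by blast
lemma sc_norm: "norm (sc c a) = cmod c * norm a"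
  using csx[THEN conjunct2, THEN conjunct2, THEN conjunct2, THEN conjunct2, THEN conjunct2, THEN conjunct2, THEN conjunct1] by blast
lemma star_star [simp]: "star (star a) = a"
  using csx[THEN conjunct2, THEN conjunct2, THEN conjunct2, THEN conjunct2, THEN conjunct2, THEN conjunct2, THEN conjunct2, THEN conjunct1] by blast
lemma star_add: "star (a + b) = star a + star b"
  using csx[THEN conjunct2, THEN conjunct2, THEN conjunct2, THEN conjunct2, THEN conjunct2, THEN conjunct2, THEN conjunct2, THEN conjunct2, THEN conjunct1] by blast
lemma star_sc: "star (sc c a) = sc (cnj c) (star a)"
  using csx[THEN conjunct2, THEN conjunct2, THEN conjunct2, THEN conjunct2, THEN conjunct2, THEN conjunct2, THEN conjunct2, THEN conjunct2, THEN conjunct2, THEN conjunct1] by blast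
lemma star_mult: "star (a * b) = star b * star a"
  using csx[THEN conjunct2, THEN conjunct2, THEN conjunct2, THEN conjunct2, THEN conjunct2, THEN conjunct2, THEN conjunct2, THEN conjunct2, THEN conjunct2, THEN conjunct2, THEN conjunct1] by blast
lemma cstar_id: "norm (star a * a) = (norm a)\<^sup>2"
  using csx[THEN conjunct2, THEN conjunct2, THEN conjunct2, THEN conjunct2, THEN conjunct2, THEN conjunct2, THEN conjunct2, THEN conjunct2, THEN conjunct2, THEN conjunct2, THEN conjunct2] by blast

lemma star_0 [simp]: "star 0 = 0"
  using star_add[of 0 0] by simp
lemma star_minus: "star (- a) = - star a"
  using minus_unique[of "star a" "star (-a)"] star_add[of a "-a"] by simp
lemma star_diff: "star (a - b) = star a - star b"
  using star_add[of a "-b"] star_minus by simp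
lemma star_scaleR: "star (r *\<^sub>R a) = r *\<^sub>R star a"
  using star_sc[of "complex_of_real r" a] by (simp add: sc_real)
lemma sc_0: "sc c 0 = 0"
  using sc_add[of c 0 0] by simp
lemma sc_minus: "sc c (- a) = - sc c a"
  using minus_unique[of "sc c a" "sc c (-a)"] sc_add[of c a "-a"] sc_0 by simp
lemma sc_diff: "sc c (a - b) = sc c a - sc c b"
  using sc_add[of c a "-b"] sc_minus by simp

lemmas star_simps = star_add star_minus star_diff star_scaleR star_mult

lemma norm_star [simp]: "norm (star a) = norm a"
proof -
  have le: "norm b \<le> norm (star b)" for b
  proof (cases "b = 0")
    case True then show ?thesis by simp
  next
    case False
    have "(norm b)^2 = norm (star b * b)" by (simp add: cstar_id)
    also have "\<dots> \<le> norm (star b) * norm b" by (rule norm_mult_ineq)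
    finally show ?thesis using False by (simp add: power2_eq_square)
  qed
  show ?thesis using le[of a] le[of "star a"] by simp
qed

lemma cstar_id': "norm (a * star a) = (norm a)\<^sup>2"
  using cstar_id[of "star a"] by simp

lemma opnorm_le:
  fixes a :: 'a
  assumes "\<And>y. norm (a * y) \<le> K * norm y" "0 \<le> K"
  shows "norm a \<le> K"
proof (cases "a = 0")
  case True then show ?thesis using assms by simp
next
  case False
  have "(norm a)^2 \<le> K * norm a" using assms(1)[of "star a"] by (simp add: cstar_id')
  then show ?thesis using False by (simp add: power2_eq_square)
qed

definition ii :: "'a \<Rightarrow> 'a" where "ii a = sc \<i> a"

lemma ii_ii: "ii (ii a) = - a"
  unfolding ii_def sc_sc using sc_real[of "-1" a] by simp
lemma ii_add: "ii (a + b) = ii a + ii b" unfolding ii_def by (rule sc_add)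
lemma ii_diff: "ii (a - b) = ii a - ii b" unfolding ii_def by (rule sc_diff)
lemma ii_minus: "ii (- a) = - ii a" unfolding ii_def by (rule sc_minus)
lemma star_ii: "star (ii a) = - ii (star a)"
  unfolding ii_def star_sc using sc_sc[of "-1" \<i> "star a"] sc_real[of "-1"] by simp
lemma ii_multL: "ii (a * b) = ii a * b" unfolding ii_def by (rule sc_multL)
lemma ii_multR: "ii (a * b) = a * ii b" unfolding ii_def by (rule sc_multR)
lemma ii_scaleR: "ii (r *\<^sub>R a) = r *\<^sub>R ii a"
  unfolding ii_def sc_real[symmetric] sc_sc by (simp add: mult.commute)
lemma norm_ii [simp]: "norm (ii a) = norm a" unfolding ii_def sc_norm by simp

definition opb :: "real \<Rightarrow> 'a \<Rightarrow> bool" where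
  "opb T h \<longleftrightarrow> (\<forall>y. norm (T *\<^sub>R y - h * y) \<le> T * norm y)"

definition pos :: "'a \<Rightarrow> bool" where
  "pos h \<longleftrightarrow> star h = h \<and> (\<exists>T\<ge>0. opb T h)"

end

primrec fpow :: "real \<Rightarrow> 'a::real_normed_algebra \<Rightarrow> nat \<Rightarrow> 'a" where
  "fpow \<mu> m 0 = 0"
| "fpow \<mu> m (Suc n) = \<mu> *\<^sub>R fpow \<mu> m n + \<mu>^n *\<^sub>R m + m * fpow \<mu> m n"

lemma fpow_1: "fpow \<mu> m (Suc 0) = m" by simp

lemma fpow_prod:
  "fpow \<mu> m i * fpow \<mu> m j = fpow \<mu> m (i+j) - \<mu>^i *\<^sub>R fpow \<mu> m j - \<mu>^j *\<^sub>R fpow \<mu> m i"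
proof (induction i)
  case 0 then show ?case by simp
next
  case (Suc i)
  have "fpow \<mu> m (Suc i) * fpow \<mu> m j
      = \<mu> *\<^sub>R (fpow \<mu> m i * fpow \<mu> m j) + \<mu>^i *\<^sub>R (m * fpow \<mu> m j) + m * (fpow \<mu> m i * fpow \<mu> m j)"
    by (simp add: distrib_right mult.assoc)
  also have "\<dots> = fpow \<mu> m (Suc i + j) - \<mu>^(Suc i) *\<^sub>R fpow \<mu> m j - \<mu>^j *\<^sub>R fpow \<mu> m (Suc i)"
    unfolding Suc.IH by (simp add: algebra_simps power_add)
  finally show ?case .
qed

lemma fpow_comm:
  assumes "p * m = m * p"
  shows "p * fpow \<mu> m n = fpow \<mu> m n * p"
proof (induction n)
  case 0 then show ?case by simp
next
  case (Suc n)
  have "p * fpow \<mu> m (Suc n) = \<mu> *\<^sub>R (p * fpow \<mu> m n) + \<mu>^n *\<^sub>R (p * m) + (p * m) * fpow \<mu> m n"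
    by (simp add: distrib_left mult.assoc)
  also have "\<dots> = \<mu> *\<^sub>R (fpow \<mu> m n * p) + \<mu>^n *\<^sub>R (m * p) + m * (fpow \<mu> m n * p)"
    by (metis Suc.IH assms mult.assoc)
  also have "\<dots> = fpow \<mu> m (Suc n) * p"
    by (simp add: distrib_right mult.assoc)
  finally show ?case .
qed

lemma fpow_bound:
  fixes m :: "'a::real_normed_algebra"
  assumes bd: "\<And>y. norm (\<mu> *\<^sub>R y + m * y) \<le> norm y"
  shows "norm (\<mu>^n *\<^sub>R y + fpow \<mu> m n * y) \<le> norm y"
proof (induction n)
  case 0 then show ?case by simp
next
  case (Suc n)
  define z where "z = \<mu>^n *\<^sub>R y + fpow \<mu> m n * y"
  have "\<mu>^(Suc n) *\<^sub>R y + fpow \<mu> m (Suc n) * y = \<mu> *\<^sub>R z + m * z"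
    unfolding z_def by (simp add: algebra_simps mult.assoc)
  then show ?case using bd[of z] Suc.IH unfolding z_def[symmetric] by simp
qed

lemma sum_rev_atMost: "(\<Sum>i\<le>k. g (k - i) i) = (\<Sum>i\<le>(k::nat). g i (k - i))"
  by (rule sum.reindex_bij_witness[where i="\<lambda>i. k - i" and j="\<lambda>i. k - i"]) auto

context cstar
begin

lemma bounded_linear_star: "bounded_linear star"
  by (rule bounded_linear_intro[where K=1]) (auto simp: star_add star_scaleR)

lemma fpow_star:
  assumes "star m = m"
  shows "star (fpow \<mu> m n) = fpow \<mu> m n"
proof (induction n)
  case 0 then show ?case by simp
next
  case (Suc n)
  have "star (fpow \<mu> m (Suc n)) = \<mu> *\<^sub>R fpow \<mu> m n + \<mu>^n *\<^sub>R m + fpow \<mu> m n * m"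
    using Suc.IH assms by (simp add: star_add star_scaleR star_mult)
  also have "\<dots> = fpow \<mu> m (Suc n)"
    using fpow_comm[of m m \<mu> n] by simp
  finally show ?case .
qed

end

context cstar
begin

lemma sqrt_series:
  assumes mu: "\<bar>\<mu>\<bar> \<le> 1" and sa: "star m = m"
    and bd: "\<And>y. norm (\<mu> *\<^sub>R y + m * y) \<le> norm y"
  shows "\<exists>C F. C * C = 2 * C - \<mu> \<and> F * F = (2 * (1 - C)) *\<^sub>R F - m \<and> star F = F
    \<and> (\<forall>p. p * m = m * p \<longrightarrow> p * F = F * p)
    \<and> (\<forall>y. norm (C *\<^sub>R y + F * y) \<le> suminf cc * norm y)
    \<and> (\<mu> = 0 \<longrightarrow> C = 0) \<and> (\<mu> = 1 \<longrightarrow> C = suminf cc)"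
proof -
  let ?f = "fpow \<mu> m"
  define C where "C = (\<Sum>n. cc n * \<mu>^n)"
  define F where "F = (\<Sum>n. cc n *\<^sub>R ?f n)"
  have fn_norm: "norm (?f n) \<le> 2" for n
  proof (rule opnorm_le)
    fix y
    have "norm (?f n * y) \<le> norm (\<mu>^n *\<^sub>R y + ?f n * y) + norm (\<mu>^n *\<^sub>R y)"
      by (metis add_diff_cancel_left' norm_triangle_ineq4)
    also have "\<dots> \<le> norm y + norm y"
    proof (rule add_mono)
      show "norm (\<mu>^n *\<^sub>R y + ?f n * y) \<le> norm y" by (rule fpow_bound[OF bd])
      have "\<bar>\<mu>\<bar>^n \<le> 1" using mu by (simp add: power_le_one)
      then show "norm (\<mu>^n *\<^sub>R y) \<le> norm y"
        by (simp add: power_abs mult_left_le_one_le)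
    qed
    finally show "norm (?f n * y) \<le> 2 * norm y" by simp
  qed simp
  have sumC: "summable (\<lambda>n. norm (cc n * \<mu>^n))"
  proof (rule summable_comparison_test'[OF summable_cc])
    fix n
    have "\<bar>\<mu>\<bar>^n \<le> 1" using mu by (simp add: power_le_one)
    then show "norm (norm (cc n * \<mu>^n)) \<le> cc n"
      using cc_nonneg[of n] by (simp add: abs_mult power_abs mult_left_le)
  qed
  have sumF: "summable (\<lambda>n. norm (cc n *\<^sub>R ?f n))"
  proof (rule summable_comparison_test'[OF summable_mult[OF summable_cc, of 2]])
    fix n
    show "norm (norm (cc n *\<^sub>R ?f n)) \<le> 2 * cc n"
      using cc_nonneg[of n] fn_norm[of n] by (simp add: mult_left_mono mult.commute)
  qed
  have sumC': "summable (\<lambda>n. cc n * \<mu>^n)" by (rule summable_norm_cancel[OF sumC])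
  have sumF': "summable (\<lambda>n. cc n *\<^sub>R ?f n)" by (rule summable_norm_cancel[OF sumF])
  have CC: "C * C = 2 * C - \<mu>"
  proof -
    have s1: "(\<lambda>k. \<Sum>i\<le>k. (cc i * \<mu>^i) * (cc (k-i) * \<mu>^(k-i))) sums (C * C)"
      unfolding C_def by (rule Cauchy_product_sums[OF sumC sumC])
    have eq: "(\<Sum>i\<le>k. (cc i * \<mu>^i) * (cc (k-i) * \<mu>^(k-i))) = 2 * (cc k * \<mu>^k) - (if k = 1 then \<mu> else 0)" for k
    proof -
      have "(\<Sum>i\<le>k. (cc i * \<mu>^i) * (cc (k-i) * \<mu>^(k-i))) = (\<Sum>i\<le>k. cc i * cc (k-i)) * \<mu>^k"
        unfolding sum_distrib_right
      proof (rule sum.cong)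
        fix i assume "i \<in> {..k}"
        then have pw: "\<mu>^i * \<mu>^(k-i) = \<mu>^k" by (metis le_add_diff_inverse atMost_iff power_add)
        have "(cc i * \<mu>^i) * (cc (k-i) * \<mu>^(k-i)) = (cc i * cc (k-i)) * (\<mu>^i * \<mu>^(k-i))"
          by (simp only: mult_ac)
        then show "(cc i * \<mu>^i) * (cc (k-i) * \<mu>^(k-i)) = cc i * cc (k-i) * \<mu>^k" by (simp only: pw)
      qed simp
      then show ?thesis using cc_conv[of k] by (cases "k = 1") (simp_all add: algebra_simps)
    qed
    have s2: "(\<lambda>k. 2 * (cc k * \<mu>^k) - (if k = 1 then \<mu> else 0)) sums (2 * C - \<mu>)"
      unfolding C_def
      by (intro sums_diff sums_mult summable_sums sumC') (rule sums_single[of 1 "\<lambda>_. \<mu>"])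
    show ?thesis using s1 s2 unfolding eq by (metis sums_unique2)
  qed
  have FF: "F * F = (2 * (1 - C)) *\<^sub>R F - m"
  proof -
    have s1: "(\<lambda>k. \<Sum>i\<le>k. (cc i *\<^sub>R ?f i) * (cc (k-i) *\<^sub>R ?f (k-i))) sums (F * F)"
      unfolding F_def by (rule Cauchy_product_sums[OF sumF sumF])
    define G where "G k = (\<Sum>i\<le>k. (cc i * \<mu>^i) *\<^sub>R (cc (k-i) *\<^sub>R ?f (k-i)))" for k
    have sG: "G sums (C *\<^sub>R F)"
      unfolding G_def C_def F_def by (rule Cauchy_product_sums_scaleR[OF sumC sumF])
    have eq: "(\<Sum>i\<le>k. (cc i *\<^sub>R ?f i) * (cc (k-i) *\<^sub>R ?f (k-i)))
        = (2 *\<^sub>R (cc k *\<^sub>R ?f k) - (if k = 1 then m else 0)) - 2 *\<^sub>R G k" for k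
    proof -
      have "(\<Sum>i\<le>k. (cc i *\<^sub>R ?f i) * (cc (k-i) *\<^sub>R ?f (k-i)))
          = (\<Sum>i\<le>k. (cc i * cc (k-i)) *\<^sub>R ?f k - (cc i * \<mu>^i) *\<^sub>R (cc (k-i) *\<^sub>R ?f (k-i))
               - (cc (k-i) * \<mu>^(k-i)) *\<^sub>R (cc i *\<^sub>R ?f i))"
      proof (rule sum.cong)
        fix i assume "i \<in> {..k}"
        then have ik: "i + (k - i) = k" by simp
        show "(cc i *\<^sub>R ?f i) * (cc (k-i) *\<^sub>R ?f (k-i)) = (cc i * cc (k-i)) *\<^sub>R ?f k - (cc i * \<mu>^i) *\<^sub>R (cc (k-i) *\<^sub>R ?f (k-i))
               - (cc (k-i) * \<mu>^(k-i)) *\<^sub>R (cc i *\<^sub>R ?f i)"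
        proof -
          have "(cc i *\<^sub>R ?f i) * (cc (k-i) *\<^sub>R ?f (k-i)) = (cc i * cc (k-i)) *\<^sub>R (?f i * ?f (k-i))"
            by simp
          also have "\<dots> = (cc i * cc (k-i)) *\<^sub>R (?f k - \<mu>^i *\<^sub>R ?f (k-i) - \<mu>^(k-i) *\<^sub>R ?f i)"
            using fpow_prod[of \<mu> m i "k-i"] unfolding ik by simp
          also have "\<dots> = (cc i * cc (k-i)) *\<^sub>R ?f k - (cc i * \<mu>^i) *\<^sub>R (cc (k-i) *\<^sub>R ?f (k-i))
               - (cc (k-i) * \<mu>^(k-i)) *\<^sub>R (cc i *\<^sub>R ?f i)"
            by (simp add: scaleR_diff_right mult_ac)
          finally show ?thesis .
        qed
      qed simp
      also have "\<dots> = (\<Sum>i\<le>k. cc i * cc (k-i)) *\<^sub>R ?f k - G k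
             - (\<Sum>i\<le>k. (cc (k-i) * \<mu>^(k-i)) *\<^sub>R (cc (k - (k-i)) *\<^sub>R ?f (k - (k-i))))"
        unfolding G_def by (simp add: sum_subtractf scaleR_sum_left)
      also have "(\<Sum>i\<le>k. (cc (k-i) * \<mu>^(k-i)) *\<^sub>R (cc (k - (k-i)) *\<^sub>R ?f (k - (k-i)))) = G k"
        unfolding G_def
        using sum_rev_atMost[of "\<lambda>a b. (cc a * \<mu>^a) *\<^sub>R (cc (k - a) *\<^sub>R ?f (k - a))" k] by simp
      finally have X: "(\<Sum>i\<le>k. (cc i *\<^sub>R ?f i) * (cc (k-i) *\<^sub>R ?f (k-i)))
         = (\<Sum>i\<le>k. cc i * cc (k-i)) *\<^sub>R ?f k - G k - G k" .
      show ?thesis unfolding X cc_conv[of k] by (cases "k = 1") (simp_all add: algebra_simps scaleR_2)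
    qed
    have s2: "(\<lambda>k. (2 *\<^sub>R (cc k *\<^sub>R ?f k) - (if k = 1 then m else 0)) - 2 *\<^sub>R G k) sums
              ((2 *\<^sub>R F - m) - 2 *\<^sub>R (C *\<^sub>R F))"
    proof -
      have sF: "(\<lambda>n. cc n *\<^sub>R ?f n) sums F" unfolding F_def by (rule summable_sums[OF sumF'])
      have sm: "(\<lambda>k. if k = 1 then m else 0) sums m" by (rule sums_single[of 1 "\<lambda>_. m"])
      show ?thesis by (intro sums_diff sums_scaleR_right sG sF sm)
    qed
    have "F * F = (2 *\<^sub>R F - m) - 2 *\<^sub>R (C *\<^sub>R F)"
      using s1 unfolding eq by (rule sums_unique2[OF _ s2])
    also have "\<dots> = (2 * (1 - C)) *\<^sub>R F - m"
      by (simp add: right_diff_distrib scaleR_left_diff_distrib)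
    finally show ?thesis .
  qed
  have starF: "star F = F"
  proof -
    have "star F = (\<Sum>n. star (cc n *\<^sub>R ?f n))"
      unfolding F_def by (rule bounded_linear.suminf[OF bounded_linear_star sumF'])
    also have "\<dots> = F" unfolding F_def by (simp add: star_scaleR fpow_star[OF sa])
    finally show ?thesis .
  qed
  have comm: "p * F = F * p" if "p * m = m * p" for p
  proof -
    have "p * F = (\<Sum>n. p * (cc n *\<^sub>R ?f n))"
      unfolding F_def by (rule suminf_mult[OF sumF', symmetric])
    also have "\<dots> = (\<Sum>n. (cc n *\<^sub>R ?f n) * p)"
      using fpow_comm[OF that] by simp
    also have "\<dots> = F * p"
      unfolding F_def by (rule suminf_mult2[OF sumF', symmetric])
    finally show ?thesis .
  qed
  have bound: "norm (C *\<^sub>R y + F * y) \<le> suminf cc * norm y" for y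
  proof -
    have a: "(\<lambda>n. (cc n * \<mu>^n) *\<^sub>R y) sums (C *\<^sub>R y)"
      unfolding C_def by (rule sums_scaleR_left[OF summable_sums[OF sumC']])
    have b: "(\<lambda>n. (cc n *\<^sub>R ?f n) * y) sums (F * y)"
      unfolding F_def by (rule sums_mult2[OF summable_sums[OF sumF']])
    have "(\<lambda>n. (cc n * \<mu>^n) *\<^sub>R y + (cc n *\<^sub>R ?f n) * y) sums (C *\<^sub>R y + F * y)"
      by (rule sums_add[OF a b])
    moreover have "(\<lambda>n. (cc n * \<mu>^n) *\<^sub>R y + (cc n *\<^sub>R ?f n) * y) = (\<lambda>n. cc n *\<^sub>R (\<mu>^n *\<^sub>R y + ?f n * y))"
      by (simp add: fun_eq_iff scaleR_add_right)
    ultimately have "(\<lambda>n. cc n *\<^sub>R (\<mu>^n *\<^sub>R y + ?f n * y)) sums (C *\<^sub>R y + F * y)" by simp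
    then have "C *\<^sub>R y + F * y = (\<Sum>n. cc n *\<^sub>R (\<mu>^n *\<^sub>R y + ?f n * y))"
      by (rule sums_unique)
    also have "norm \<dots> \<le> (\<Sum>n. cc n * norm y)"
    proof (rule norm_suminf_le)
      fix n
      show "norm (cc n *\<^sub>R (\<mu>^n *\<^sub>R y + ?f n * y)) \<le> cc n * norm y"
        using fpow_bound[OF bd, of n y] cc_nonneg[of n] by (simp add: mult_left_mono)
      show "summable (\<lambda>n. cc n * norm y)" by (intro summable_mult2 summable_cc)
    qed
    also have "\<dots> = suminf cc * norm y" by (rule suminf_mult2[OF summable_cc, symmetric])
    finally show ?thesis .
  qed
  have C0: "C = 0" if "\<mu> = 0"
  proof -
    have "(\<lambda>n. cc n * \<mu>^n) = (\<lambda>n. 0)"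
    proof
      fix n show "cc n * \<mu>^n = 0" using that by (cases n) simp_all
    qed
    then show ?thesis unfolding C_def by simp
  qed
  have C1: "C = suminf cc" if "\<mu> = 1" using that unfolding C_def by simp
  show ?thesis
    apply (rule exI[of _ C], rule exI[of _ F])
    apply (intro conjI allI impI)
    apply (rule CC) apply (rule FF) apply (rule starF) apply (erule comm) apply (rule bound)
    apply (erule C0) apply (erule C1)
    done
qed

end

context cstar
begin

lemma opb_mono:
  assumes "opb T h" "T \<le> T'"
  shows "opb T' h"
  unfolding opb_def
proof
  fix y
  have "norm (T' *\<^sub>R y - h * y) = norm ((T *\<^sub>R y - h * y) + (T' - T) *\<^sub>R y)"
    by (simp add: algebra_simps)
  also have "\<dots> \<le> norm (T *\<^sub>R y - h * y) + norm ((T' - T) *\<^sub>R y)" by (rule norm_triangle_ineq)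
  also have "\<dots> \<le> T * norm y + (T' - T) * norm y"
    using assms by (intro add_mono) (auto simp: opb_def)
  finally show "norm (T' *\<^sub>R y - h * y) \<le> T' * norm y" by (simp add: algebra_simps)
qed

lemma ii_0 [simp]: "ii 0 = 0" unfolding ii_def by (rule sc_0)

lemma unit_lemma:
  assumes "star p * q = star q * p"
  shows "(norm (p + ii q))^2 = norm (star p * p + star q * q)"
proof -
  have "star (p + ii q) * (p + ii q) = star p * p + ii (star p * q - star q * p) + star q * q"
    by (simp add: star_add star_ii algebra_simps ii_multL[symmetric] ii_multR[symmetric] ii_ii ii_diff)
  also have "\<dots> = star p * p + star q * q" using assms by (simp add: ii_diff)
  finally show ?thesis by (simp add: cstar_id[symmetric])
qed

lemma sq_opb1:
  assumes sa: "star b = b" and nb: "norm b \<le> 1"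
  shows "norm (y - (b * b) * y) \<le> norm y"
proof -
  have a1: "\<bar>0::real\<bar> \<le> 1" by simp
  have a2: "star (b * b) = b * b" using sa by (simp add: star_mult)
  have a3: "norm ((0::real) *\<^sub>R y + (b * b) * y) \<le> norm y" for y
  proof -
    have "norm (b * b * y) = norm (b * (b * y))" by (simp add: mult.assoc)
    also have "\<dots> \<le> norm b * norm (b * y)" by (rule norm_mult_ineq)
    also have "\<dots> \<le> norm b * (norm b * norm y)" by (rule mult_left_mono[OF norm_mult_ineq norm_ge_zero])
    also have "\<dots> = (norm b * norm b) * norm y" by (simp add: mult.assoc)
    also have "\<dots> \<le> norm y"
    proof (rule mult_left_le_one_le)
      show "norm b * norm b \<le> 1" by (rule mult_le_one[OF nb norm_ge_zero nb])
    qed simp_all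
    finally show ?thesis by simp
  qed
  obtain C F where P: "C * C = 2 * C - 0 \<and> F * F = (2 * (1 - C)) *\<^sub>R F - b * b \<and> star F = F
    \<and> (\<forall>p. p * (b * b) = (b * b) * p \<longrightarrow> p * F = F * p)
    \<and> (\<forall>y. norm (C *\<^sub>R y + F * y) \<le> suminf cc * norm y)
    \<and> ((0::real) = 0 \<longrightarrow> C = 0) \<and> ((0::real) = 1 \<longrightarrow> C = suminf cc)"
    using sqrt_series[of 0 "b * b", OF a1 a2 a3] by blast
  have FF: "F * F = (2 * (1 - C)) *\<^sub>R F - b * b" using P by blast
  have sF: "star F = F" using P by blast
  have comm: "\<forall>p. p * (b * b) = (b * b) * p \<longrightarrow> p * F = F * p" using P by blast
  have C0: "C = 0" using P by blast
  have FF': "F * F = 2 *\<^sub>R F - b * b" using FF C0 by simp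
  have bbb: "b * (b * b) = (b * b) * b" by (simp add: mult.assoc)
  have bF: "b * F = F * b" using comm bbb by blast
  have key: "norm (z - F * z) \<le> norm z" for z
  proof -
    define p where "p = b * z"
    define q where "q = z - F * z"
    have sq: "star q = star z - star z * F" unfolding q_def by (simp add: star_diff star_mult sF)
    have sp: "star p = star z * b" unfolding p_def by (simp add: star_mult sa)
    have bFz: "b * (F * z) = F * (b * z)" by (metis bF mult.assoc)
    have c1: "star p * q = star z * (b * z) - star z * (b * (F * z))"
      unfolding sp unfolding q_def by (simp add: algebra_simps)
    have c2: "star q * p = star z * (b * z) - star z * (F * (b * z))"
      unfolding sq unfolding p_def by (simp add: algebra_simps)
    have cross: "star p * q = star q * p" unfolding c1 c2 bFz ..
    have sum: "star p * p + star q * q = star z * z"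
    proof -
      have "star p * p + star q * q = star z * (b * b) * z + star z * z - 2 *\<^sub>R (star z * F * z) + star z * (F * F) * z"
        unfolding sq sp unfolding p_def q_def by (simp add: algebra_simps scaleR_2)
      also have "\<dots> = star z * z" unfolding FF' by (simp add: algebra_simps scaleR_2)
      finally show ?thesis .
    qed
    have n1: "norm (p + ii q) = norm z"
      using unit_lemma[OF cross] sum cstar_id[of z] by (simp add: power2_eq_iff_nonneg)
    have cross2: "star p * (- q) = star (- q) * p" using cross by (simp add: star_minus)
    have n2: "norm (p + ii (- q)) = norm z"
      using unit_lemma[OF cross2] sum cstar_id[of z] by (simp add: power2_eq_iff_nonneg star_minus)
    have "2 *\<^sub>R ii q = (p + ii q) - (p + ii (- q))" by (simp add: ii_minus scaleR_2)
    then have "2 * norm q \<le> norm (p + ii q) + norm (p + ii (- q))"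
      by (metis norm_ii norm_scaleR norm_triangle_ineq4 abs_of_nonneg zero_le_numeral)
    then show ?thesis using n1 n2 unfolding q_def by simp
  qed
  have "(y - F * y) - F * (y - F * y) = y - 2 *\<^sub>R (F * y) + (F * F) * y"
    by (simp add: algebra_simps scaleR_2)
  also have "\<dots> = y - (b * b) * y" unfolding FF' by (simp add: algebra_simps scaleR_2)
  finally have E: "y - (b * b) * y = (y - F * y) - F * (y - F * y)" by simp
  have "norm (y - (b * b) * y) \<le> norm (y - F * y)" unfolding E by (rule key)
  also have "\<dots> \<le> norm y" by (rule key)
  finally show ?thesis .
qed

lemma sq_opb:
  assumes sa: "star a = a"
  shows "opb ((norm a)^2) (a * a)"
proof (cases "a = 0")
  case True then show ?thesis by (simp add: opb_def)
next
  case False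
  define t where "t = norm a"
  have t: "t > 0" using False unfolding t_def by simp
  define b where "b = (1 / t) *\<^sub>R a"
  have sb: "star b = b" unfolding b_def by (simp add: star_scaleR sa)
  have nb: "norm b \<le> 1" unfolding b_def t_def using t t_def by simp
  have ab: "a * a = (t^2) *\<^sub>R (b * b)" unfolding b_def using t by (simp add: power2_eq_square)
  show ?thesis unfolding opb_def t_def[symmetric]
  proof
    fix y
    have "norm (t^2 *\<^sub>R y - a * a * y) = t^2 * norm (y - b * b * y)"
      unfolding ab by (simp add: scaleR_diff_right[symmetric])
    also have "\<dots> \<le> t^2 * norm y" using sq_opb1[OF sb nb] by (simp add: mult_left_mono)
    finally show "norm (t^2 *\<^sub>R y - a * a * y) \<le> t^2 * norm y" .
  qed
qed

lemma pos_sq: "star a = a \<Longrightarrow> pos (a * a)"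
  unfolding pos_def using sq_opb[of a] by (auto simp: star_mult intro!: exI[of _ "(norm a)^2"])

lemma pos_add: "pos a \<Longrightarrow> pos b \<Longrightarrow> pos (a + b)"
  unfolding pos_def
proof (elim conjE exE, intro conjI exI)
  fix S T assume "star a = a" "star b = b" "S \<ge> 0" "T \<ge> 0" "opb S a" "opb T b"
  then show "star (a + b) = a + b" by (simp add: star_add)
  show "0 \<le> S + T" using \<open>S \<ge> 0\<close> \<open>T \<ge> 0\<close> by simp
  show "opb (S + T) (a + b)" unfolding opb_def
  proof
    fix y
    have "norm ((S + T) *\<^sub>R y - (a + b) * y) = norm ((S *\<^sub>R y - a * y) + (T *\<^sub>R y - b * y))"
      by (simp add: algebra_simps)
    also have "\<dots> \<le> S * norm y + T * norm y"
      using \<open>opb S a\<close> \<open>opb T b\<close> unfolding opb_def by (meson add_mono norm_triangle_ineq order_trans)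
    finally show "norm ((S + T) *\<^sub>R y - (a + b) * y) \<le> (S + T) * norm y" by (simp add: algebra_simps)
  qed
qed

lemma pos_scale: "pos a \<Longrightarrow> 0 \<le> c \<Longrightarrow> pos (c *\<^sub>R a)"
  unfolding pos_def
proof (elim conjE exE, intro conjI exI)
  fix T assume "star a = a" "T \<ge> 0" "opb T a" "0 \<le> c"
  then show "star (c *\<^sub>R a) = c *\<^sub>R a" by (simp add: star_scaleR)
  show "0 \<le> c * T" using \<open>T \<ge> 0\<close> \<open>0 \<le> c\<close> by simp
  show "opb (c * T) (c *\<^sub>R a)" unfolding opb_def
  proof
    fix y
    have "(c * T) *\<^sub>R y - (c *\<^sub>R a) * y = c *\<^sub>R (T *\<^sub>R y - a * y)"
      by (simp add: scaleR_diff_right)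
    then have "norm ((c * T) *\<^sub>R y - (c *\<^sub>R a) * y) = c * norm (T *\<^sub>R y - a * y)"
      using \<open>0 \<le> c\<close> by simp
    also have "\<dots> \<le> c * (T * norm y)" using \<open>opb T a\<close> \<open>0 \<le> c\<close> unfolding opb_def
      by (simp add: mult_left_mono)
    finally show "norm ((c * T) *\<^sub>R y - (c *\<^sub>R a) * y) \<le> (c * T) * norm y" by simp
  qed
qed

lemma pos_sqrt:
  assumes "pos h"
  shows "\<exists>r. star r = r \<and> r * r = h \<and> pos r \<and> (\<forall>p. p * h = h * p \<longrightarrow> p * r = r * p)"
proof -
  obtain T where sh: "star h = h" and T: "T \<ge> 0" and oT: "opb T h" using assms unfolding pos_def by auto
  show ?thesis
  proof (cases "T = 0")
    case True
    have "norm h \<le> 0" by (rule opnorm_le) (use oT True in \<open>auto simp: opb_def\<close>)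
    then have "h = 0" by simp
    then show ?thesis by (intro exI[of _ 0]) (auto simp: pos_def opb_def)
  next
    case False
    then have Tp: "T > 0" using T by simp
    define q where "q = (1 / T) *\<^sub>R h"
    have sq: "star (- q) = - q" unfolding q_def by (simp add: star_minus star_scaleR sh)
    have bq: "norm ((1::real) *\<^sub>R y + (- q) * y) \<le> norm y" for y
    proof -
      have "norm (T *\<^sub>R y - h * y) \<le> T * norm y" using oT unfolding opb_def by blast
      moreover have "T *\<^sub>R y - h * y = T *\<^sub>R (y - q * y)" unfolding q_def using Tp
        by (simp add: scaleR_diff_right)
      ultimately show ?thesis using Tp by (simp add: mult_le_cancel_left_pos)
    qed
    have a1: "\<bar>1::real\<bar> \<le> 1" by simp
    obtain C F where P: "C * C = 2 * C - 1 \<and> F * F = (2 * (1 - C)) *\<^sub>R F - - q \<and> star F = F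
    \<and> (\<forall>p. p * - q = - q * p \<longrightarrow> p * F = F * p)
    \<and> (\<forall>y. norm (C *\<^sub>R y + F * y) \<le> suminf cc * norm y)
    \<and> ((1::real) = 0 \<longrightarrow> C = 0) \<and> ((1::real) = 1 \<longrightarrow> C = suminf cc)"
      using sqrt_series[of 1 "- q", OF a1 sq bq] by blast
    have CC: "C * C = 2 * C - 1" using P by blast
    have FF: "F * F = (2 * (1 - C)) *\<^sub>R F - - q" using P by blast
    have sF: "star F = F" using P by blast
    have comm: "\<forall>p. p * - q = - q * p \<longrightarrow> p * F = F * p" using P by blast
    have bd: "\<forall>y. norm (C *\<^sub>R y + F * y) \<le> suminf cc * norm y" using P by blast
    have C1: "C = suminf cc" using P by blast
    have "(C - 1) * (C - 1) = 0" using CC by (simp add: algebra_simps)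
    then have C1': "C = 1" by simp
    define r where "r = sqrt T *\<^sub>R (- F)"
    have sr: "star r = r" unfolding r_def by (simp add: star_scaleR star_minus sF)
    have rr: "r * r = h" unfolding r_def using FF C1' Tp unfolding q_def by simp
    have opr: "opb (sqrt T) r" unfolding opb_def
    proof
      fix y
      have "norm (sqrt T *\<^sub>R y - r * y) = sqrt T * norm (y + F * y)"
        unfolding r_def using T by (simp add: scaleR_add_right[symmetric])
      also have "\<dots> \<le> sqrt T * norm y" using bd C1 C1' T by (simp add: mult_left_mono)
      finally show "norm (sqrt T *\<^sub>R y - r * y) \<le> sqrt T * norm y" .
    qed
    have pr: "pos r" unfolding pos_def using sr opr T by (auto intro!: exI[of _ "sqrt T"])
    have cm: "p * r = r * p" if "p * h = h * p" for p
    proof -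
      have "p * - q = - q * p" unfolding q_def using that by simp
      then have "p * F = F * p" using comm by blast
      then show ?thesis unfolding r_def by simp
    qed
    show ?thesis using sr rr pr cm by blast
  qed
qed

lemma pos_canon:
  assumes "pos h"
  shows "opb (norm h) h"
proof -
  obtain r where sr: "star r = r" and rr: "r * r = h" using pos_sqrt[OF assms] by blast
  have "norm h = (norm r)^2" using cstar_id[of r] sr rr by simp
  then show ?thesis using sq_opb[OF sr] rr by simp
qed

end

lemma scaleR_2t: "(2 * t) *\<^sub>R (X::'b::real_vector) = t *\<^sub>R X + t *\<^sub>R X"
  by (metis scaleR_2 scaleR_scaleR)

lemma scaleR_t2: "(t * 2) *\<^sub>R (X::'b::real_vector) = t *\<^sub>R X + t *\<^sub>R X"
  by (metis scaleR_2t mult.commute)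

context cstar
begin

lemma K1:
  assumes pQ: "pos (x * star x)" and pN: "pos (- (star x * x))"
  shows "x = 0"
proof -
  define s where "s = (norm x)^2"
  define P where "P = star x * x"
  define N where "N = - P"
  have s0: "s \<ge> 0" unfolding s_def by simp
  have sN: "star N = N" by (simp add: N_def P_def star_minus star_mult)
  have nN: "norm N = s" using cstar_id[of x] by (simp add: N_def P_def s_def)
  have nQ: "norm (x * star x) = s" using cstar_id'[of x] by (simp add: s_def)
  define v where "v = s *\<^sub>R x - (x * star x) * x"
  have vb: "norm v \<le> s * norm x"
    using pos_canon[OF pQ] unfolding opb_def nQ v_def by blast
  have vv: "star v * v = s^2 *\<^sub>R P - (2 * s) *\<^sub>R (P * P) + P * P * P"
  proof -
    have sv: "star v = s *\<^sub>R star x - star x * x * star x"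
      unfolding v_def by (simp add: star_diff star_scaleR star_mult mult.assoc)
    show ?thesis unfolding sv unfolding v_def P_def
      by (simp add: algebra_simps power2_eq_square scaleR_2 scaleR_2t scaleR_t2)
  qed
  have vv': "star v * v = - (s^2 *\<^sub>R N + (2 * s) *\<^sub>R (N * N) + N * N * N)"
    unfolding vv N_def by (simp add: algebra_simps scaleR_2t scaleR_t2)
  have nv: "(norm v)^2 = norm (s^2 *\<^sub>R N + (2 * s) *\<^sub>R (N * N) + N * N * N)"
    using cstar_id[of v] unfolding vv' norm_minus_cancel by (rule sym)
  obtain r where sr: "star r = r" and rr: "r * r = N" using pos_sqrt[OF pN[folded P_def, folded N_def]] by blast
  have pN': "pos N" using pN unfolding N_def P_def .
  have pN3: "pos (N * N * N)"
  proof -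
    have "N * N * N = (r * r * r) * (r * r * r)" unfolding rr[symmetric] by (simp add: mult.assoc)
    moreover have "star (r * r * r) = r * r * r" using sr by (simp add: star_mult mult.assoc)
    ultimately show ?thesis using pos_sq by metis
  qed
  define B where "B = s^2 *\<^sub>R N + N * N * N"
  have pB: "pos B" unfolding B_def by (intro pos_add pos_scale pN' pN3) simp
  obtain \<beta> where sb: "star \<beta> = \<beta>" and bb: "\<beta> * \<beta> = B"
    and cb: "\<forall>p. p * B = B * p \<longrightarrow> p * \<beta> = \<beta> * p"
    using pos_sqrt[OF pB] by blast
  have NB: "N * B = B * N" unfolding B_def by (simp add: algebra_simps)
  have Nb: "N * \<beta> = \<beta> * N" using cb NB by blast
  define a where "a = sqrt (2 * s) *\<^sub>R N"
  have sa: "star a = a" unfolding a_def by (simp add: star_scaleR sN)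
  have ab: "star a * \<beta> = star \<beta> * a" unfolding sa sb unfolding a_def by (simp add: Nb)
  define z where "z = a + ii \<beta>"
  have nz: "(norm z)^2 = norm ((2 * s) *\<^sub>R (N * N) + B)"
  proof -
    have "(norm z)^2 = norm (star a * a + star \<beta> * \<beta>)" unfolding z_def by (rule unit_lemma[OF ab])
    also have "star a * a + star \<beta> * \<beta> = (2 * s) *\<^sub>R (N * N) + B"
      unfolding sa sb bb unfolding a_def using s0 by simp
    finally show ?thesis .
  qed
  have nzv: "(norm z)^2 = (norm v)^2" unfolding nz nv B_def by (simp add: algebra_simps scaleR_2t scaleR_t2)
  have sz: "star z = a - ii \<beta>" unfolding z_def by (simp add: star_add star_ii sa sb)
  have "2 *\<^sub>R a = z + star z" unfolding sz unfolding z_def by (simp add: scaleR_2)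
  then have "2 * norm a \<le> norm z + norm (star z)" by (metis norm_scaleR norm_triangle_ineq abs_of_nonneg zero_le_numeral)
  then have na: "norm a \<le> norm z" by simp
  have "norm a = sqrt (2 * s) * s" unfolding a_def nN[symmetric] using s0 by simp
  then have "(norm a)^2 = 2 * s^3" using s0 by (simp add: power2_eq_square power3_eq_cube algebra_simps)
  moreover have "(norm a)^2 \<le> (norm z)^2" using na by (simp add: power_mono)
  moreover have "(norm v)^2 \<le> (s * norm x)^2" using vb by (simp add: power_mono)
  moreover have "(s * norm x)^2 = s^3" unfolding s_def by (simp add: power2_eq_square power3_eq_cube algebra_simps)
  ultimately have "2 * s^3 \<le> s^3" using nzv by linarith
  then have "s^3 \<le> 0" by simp
  then have "s = 0" using s0 by (metis antisym power_eq_0_iff zero_le_power zero_less_numeral less_le)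
  then show ?thesis unfolding s_def by simp
qed


lemma ii_sq: "ii u * ii u = - (u * u)"
proof -
  have "ii u * ii u = ii (u * ii u)" by (rule ii_multL[symmetric])
  also have "u * ii u = ii (u * u)" by (rule ii_multR[symmetric])
  finally show ?thesis by (simp add: ii_ii)
qed

lemma pos_starx: "pos (star x * x)"
proof -
  define h where "h = star x * x"
  have sh: "star h = h" unfolding h_def by (simp add: star_mult)
  have phh: "pos (h * h)" by (rule pos_sq[OF sh])
  obtain b where sb: "star b = b" and bb: "b * b = h * h" and pb: "pos b"
    and cb: "\<forall>p. p * (h * h) = (h * h) * p \<longrightarrow> p * b = b * p"
    using pos_sqrt[OF phh] by blast
  have hhh: "h * (h * h) = (h * h) * h" by (simp add: mult.assoc)
  have hb: "h * b = b * h" using cb hhh by blast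
  obtain \<beta> where sbe: "star \<beta> = \<beta>" and bebe: "\<beta> * \<beta> = b"
    and cbe: "\<forall>p. p * b = b * p \<longrightarrow> p * \<beta> = \<beta> * p"
    using pos_sqrt[OF pb] by blast
  have hbe: "h * \<beta> = \<beta> * h" using cbe hb by blast
  have bbe: "b * \<beta> = \<beta> * b" using cbe by blast
  define k where "k = b - h"
  have sk: "star k = k" unfolding k_def by (simp add: star_diff sb sh)
  have kb: "k * b = b * k" unfolding k_def by (simp add: algebra_simps hb)
  have kbe: "k * \<beta> = \<beta> * k" unfolding k_def by (simp add: algebra_simps hbe bbe)
  have kk: "k * k = 2 *\<^sub>R (b * k)"
  proof -
    have "k * k = b * b - b * h - h * b + h * h" unfolding k_def by (simp add: algebra_simps)
    also have "\<dots> = 2 *\<^sub>R (b * k)" unfolding k_def by (simp add: algebra_simps scaleR_2 bb hb)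
    finally show ?thesis .
  qed
  have kkk: "k * k * k = 2 *\<^sub>R (b * k * k)"
  proof -
    have "k * k * k = k * (k * k)" by (simp add: mult.assoc)
    also have "\<dots> = 2 *\<^sub>R (k * b * k)" unfolding kk by (simp add: mult.assoc)
    also have "\<dots> = 2 *\<^sub>R (b * k * k)" unfolding kb ..
    finally show ?thesis .
  qed
  define w where "w = \<beta> * k"
  have sw: "star w = w" unfolding w_def by (simp add: star_mult sk sbe kbe)
  have ww: "w * w = b * k * k"
  proof -
    have "w * w = \<beta> * (k * \<beta>) * k" unfolding w_def by (simp add: mult.assoc)
    also have "\<dots> = b * k * k" unfolding kbe bebe[symmetric] by (simp add: mult.assoc)
    finally show ?thesis .
  qed
  define c where "c = x * k"
  have scc: "star c * c = - (w * w)"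
  proof -
    have "star c * c = k * h * k" unfolding c_def h_def by (simp add: star_mult sk mult.assoc)
    also have "\<dots> = k * b * k - k * k * k" unfolding k_def by (simp add: algebra_simps)
    also have "\<dots> = b * k * k - 2 *\<^sub>R (b * k * k)" unfolding kb kkk ..
    also have "\<dots> = - (w * w)" unfolding ww by (simp add: scaleR_2)
    finally show ?thesis .
  qed
  have p1: "pos (- (star c * c))" unfolding scc using pos_sq[OF sw] by simp
  define a1 where "a1 = (1/2) *\<^sub>R (c + star c)"
  define u where "u = (1/2) *\<^sub>R (star c - c)"
  define d where "d = ii u"
  have sa1: "star a1 = a1" unfolding a1_def by (simp add: star_scaleR star_add add.commute)
  have su: "star u = - u" unfolding u_def by (simp add: star_scaleR star_diff algebra_simps)
  have sd: "star d = d" unfolding d_def by (simp add: star_ii su ii_minus)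
  have dd: "d * d = - (u * u)" unfolding d_def by (rule ii_sq)
  have cc: "c * star c = 2 *\<^sub>R (a1 * a1) + 2 *\<^sub>R (d * d) + - (star c * c)"
  proof -
    have e1: "(c + star c) * (c + star c) - (star c - c) * (star c - c) = 2 *\<^sub>R (c * star c) + 2 *\<^sub>R (star c * c)"
      by (simp add: algebra_simps scaleR_2)
    have e2: "2 *\<^sub>R (a1 * a1) = (1/2) *\<^sub>R ((c + star c) * (c + star c))"
      unfolding a1_def by simp
    have e3: "2 *\<^sub>R (d * d) = - ((1/2) *\<^sub>R ((star c - c) * (star c - c)))"
      unfolding dd u_def by simp
    have "2 *\<^sub>R (a1 * a1) + 2 *\<^sub>R (d * d) = (1/2) *\<^sub>R ((c + star c) * (c + star c) - (star c - c) * (star c - c))"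
      unfolding e2 e3 by (simp add: scaleR_diff_right)
    also have "\<dots> = c * star c + star c * c" unfolding e1 by (simp add: scaleR_add_right)
    finally show ?thesis by simp
  qed
  have p2: "pos (c * star c)" unfolding cc
    by (intro pos_add pos_scale pos_sq sa1 sd p1) simp_all
  have "c = 0" by (rule K1[OF p2 p1])
  then have "w * w = 0" using scc by simp
  then have "w = 0" using cstar_id[of w] sw by simp
  then have "k * k * k = 0" using kkk ww w_def by simp
  then have "(k * k) * (k * k) = 0" by (metis mult.assoc mult_zero_right)
  then have "k * k = 0" using cstar_id[of "k * k"] sk by (simp add: star_mult)
  then have "k = 0" using cstar_id[of k] sk by simp
  then have "h = b" unfolding k_def by simp
  then show ?thesis using pb unfolding h_def by simp
qed

lemma cpos_add:
  assumes "cstar_pos star a" "cstar_pos star b"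
  shows "cstar_pos star (a + b)"
proof -
  obtain u where u: "a = star u * u" using assms(1) unfolding cstar_pos_def by blast
  obtain v where v: "b = star v * v" using assms(2) unfolding cstar_pos_def by blast
  have "pos (a + b)" unfolding u v by (intro pos_add pos_starx)
  then obtain r where "star r = r" "r * r = a + b" using pos_sqrt by blast
  then show ?thesis unfolding cstar_pos_def by metis
qed

end

theorem lemma4p1:
  fixes sc :: "complex \<Rightarrow> 'a::{real_normed_algebra,banach} \<Rightarrow> 'a"
    and star :: "'a \<Rightarrow> 'a"
    and scX :: "complex \<Rightarrow> 'x::ab_group_add \<Rightarrow> 'x"
    and act :: "'x \<Rightarrow> 'a \<Rightarrow> 'x"
    and ip :: "'x \<Rightarrow> 'x \<Rightarrow> 'a"
    and K :: "'x \<Rightarrow> 'x"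
    and x u v :: 'x
  assumes "hilbert_cstar_module sc star scX act ip"
    and "module_projection ip K"
    and "u + v \<in> range K"
  shows "semi_inner ip (\<lambda>z. z - K z) x x = ip x x - ip (K x) x
       \<and> cstar_le star (ip x x - ip (K x) x)
           (scaleR (1/4) (ip (v - u) (v - u)) - cstar_Re star (ip (x - u) (v - x)))
       \<and> (cstar_le star 0 (cstar_Re star (ip (x - u) (v - x))) \<longrightarrow>
           cstar_le star (ip x x - ip (K x) x) (scaleR (1/4) (ip (v - u) (v - u))))"
proof -
  note H = assms(1)[unfolded hilbert_cstar_module_def]
  have csa: "cstar_algebra sc star" using H by blast
  interpret cstar sc star by (rule cstar.intro[OF csa])
  have ip_add2: "ip a (b + c) = ip a b + ip a c" for a b c
    using H[THEN conjunct2, THEN conjunct2, THEN conjunct2, THEN conjunct2, THEN conjunct2,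
        THEN conjunct2, THEN conjunct2, THEN conjunct2, THEN conjunct2, THEN conjunct1] by blast
  have ip_sym: "ip b a = star (ip a b)" for a b
    using H[THEN conjunct2, THEN conjunct2, THEN conjunct2, THEN conjunct2, THEN conjunct2,
        THEN conjunct2, THEN conjunct2, THEN conjunct2, THEN conjunct2, THEN conjunct2,
        THEN conjunct2, THEN conjunct2, THEN conjunct1] by blast
  have ip_pos: "cstar_pos star (ip a a)" for a
    using H[THEN conjunct2, THEN conjunct2, THEN conjunct2, THEN conjunct2, THEN conjunct2,
        THEN conjunct2, THEN conjunct2, THEN conjunct2, THEN conjunct2, THEN conjunct2,
        THEN conjunct2, THEN conjunct2, THEN conjunct2, THEN conjunct1] by blast
  have ip_add1: "ip (a + b) c = ip a c + ip b c" for a b c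
    by (metis ip_sym ip_add2 star_add)
  have ip_0_2: "ip a 0 = 0" for a using ip_add2[of a 0 0] by simp
  have ip_minus2: "ip a (- b) = - ip a b" for a b
    using ip_add2[of a b "-b"] ip_0_2[of a] by (simp add: eq_neg_iff_add_eq_0 add.commute)
  have ip_diff2: "ip a (b - c) = ip a b - ip a c" for a b c
    using ip_add2[of a b "-c"] ip_minus2 by simp
  have ip_minus1: "ip (- a) b = - ip a b" for a b
    by (metis ip_sym ip_minus2 star_minus)
  have ip_diff1: "ip (a - b) c = ip a c - ip b c" for a b c
    using ip_add1[of a "-b" c] ip_minus1 by simp
  have Kp: "ip (K a) b = ip a (K b)" for a b using assms(2) unfolding module_projection_def by blast
  have KK: "K (K a) = K a" for a using assms(2) unfolding module_projection_def by blast
  obtain p where g: "u + v = K p" using assms(3) by auto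
  have F1: "ip (K x) (K x) = ip (K x) x"
    using Kp[of x "K x"] KK[of x] Kp[of x x] by simp
  have F2: "ip (K x) v = ip x u + ip x v - ip (K x) u"
  proof -
    have "ip (K x) (u + v) = ip x (u + v)" unfolding g using Kp[of x "K p"] KK[of p] by simp
    then show ?thesis unfolding ip_add2 by (simp add: algebra_simps)
  qed
  have F3: "ip v (K x) = ip u x + ip v x - ip u (K x)"
  proof -
    have "ip (u + v) (K x) = ip (u + v) x" using F2 ip_sym[of "K x" "u + v"] ip_sym[of x "u + v"]
      unfolding ip_add2 by (metis add_diff_cancel_left' diff_add_cancel ip_add1 ip_add2 ip_sym)
    then show ?thesis unfolding ip_add1 by (simp add: algebra_simps)
  qed
  define y where "y = K x + K x - (u + v)"
  define A where "A = ip (v - u) (v - u)"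
  define B where "B = ip (x - u) (v - x)"
  define Cx where "Cx = ip x x - ip (K x) x"
  have B': "star B = ip (v - x) (x - u)" unfolding B_def by (rule ip_sym[symmetric])
  have big: "A - (B + star B) - (B + star B) - (Cx + Cx + Cx + Cx) = ip y y"
    unfolding A_def B' unfolding B_def Cx_def y_def
    by (simp add: ip_add1 ip_add2 ip_diff1 ip_diff2 F1 F2 F3 algebra_simps)
  define D where "D = (1/4) *\<^sub>R A - cstar_Re star B - Cx"
  have DD: "D = (1/4) *\<^sub>R ip y y"
  proof -
    have four: "(4::real) *\<^sub>R Cx = Cx + Cx + Cx + Cx"
    proof -
      have "(4::real) *\<^sub>R Cx = 2 *\<^sub>R (2 *\<^sub>R Cx)" by simp
      then show ?thesis by (simp add: scaleR_2 add.assoc)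
    qed
    have big2: "A - 2 *\<^sub>R (B + star B) - 4 *\<^sub>R Cx = ip y y"
      unfolding four scaleR_2 using big by (simp add: diff_diff_eq)
    have "(1/4) *\<^sub>R ip y y = (1/4) *\<^sub>R (A - 2 *\<^sub>R (B + star B) - 4 *\<^sub>R Cx)"
      unfolding big2 ..
    also have "\<dots> = (1/4) *\<^sub>R A - (1/2) *\<^sub>R (B + star B) - Cx"
      by (simp add: scaleR_diff_right)
    also have "\<dots> = D" unfolding D_def cstar_Re_def ..
    finally show ?thesis ..
  qed
  have pD: "cstar_pos star D"
  proof -
    obtain b where "ip y y = star b * b" using ip_pos[of y] unfolding cstar_pos_def by blast
    then have "D = star ((1/2) *\<^sub>R b) * ((1/2) *\<^sub>R b)" unfolding DD by (simp add: star_scaleR)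
    then show ?thesis unfolding cstar_pos_def by blast
  qed
  have c1: "semi_inner ip (\<lambda>z. z - K z) x x = ip x x - ip (K x) x"
    unfolding semi_inner_def by (rule ip_diff1)
  have c2: "cstar_le star (ip x x - ip (K x) x)
           (scaleR (1/4) (ip (v - u) (v - u)) - cstar_Re star (ip (x - u) (v - x)))"
    unfolding cstar_le_def using pD unfolding D_def A_def B_def Cx_def by simp
  have c3: "cstar_le star (ip x x - ip (K x) x) (scaleR (1/4) (ip (v - u) (v - u)))"
    if "cstar_le star 0 (cstar_Re star (ip (x - u) (v - x)))"
  proof -
    have pR: "cstar_pos star (cstar_Re star B)" using that unfolding cstar_le_def B_def by simp
    have "cstar_pos star (D + cstar_Re star B)" by (rule cpos_add[OF pD pR])
    moreover have "D + cstar_Re star B = scaleR (1/4) (ip (v - u) (v - u)) - (ip x x - ip (K x) x)"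
      unfolding D_def A_def Cx_def by simp
    ultimately show ?thesis unfolding cstar_le_def by simp
  qed
  show ?thesis using c1 c2 c3 by blast
qed

end
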